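(* Let $\Gamma_3^*\subseteq\mathbb{R}^7$ be the set of entropy vectors of triples of discrete random variables, and let $\Lambda_3\subseteq\Gamma_3^*$ be the set of quasi-uniform entropy vectors. Let $\mathbf{e}_1=[1,0,0,1,1,0,1]^\intercal$, $\mathbf{e}_2=[0,1,0,1,0,1,1]^\intercal$, $\mathbf{e}_3=[0,0,1,0,1,1,1]^\intercal$, $\mathbf{e}_{123'}=[1,1,1,2,2,2,2]^\intercal$, and let $\Theta=\mathrm{cone}(\mathbf{e}_1,\mathbf{e}_2,\mathbf{e}_3,\mathbf{e}_{123'})=\{\lambda_1\mathbf{e}_1+\lambda_2\mathbf{e}_2+\lambda_3\mathbf{e}_3+\lambda_{123'}\mathbf{e}_{123'}:\lambda_1,\lambda_2,\lambda_3,\lambda_{123'}\ge 0\}$. Let $\Theta^{\mathrm{in}}$ be the set of all vectors $\lambda_1\mathbf{e}_1+\lambda_2\mathbf{e}_2+\lambda_3\mathbf{e}_3+\lambda_{123'}\mathbf{e}_{123'}$ with $\lambda_1,\lambda_2,\lambda_3\ge 0$ and $\lambda_{123'}=\log m$ for some $m\in\mathbb{N}$. Then there exists a quasi-uniform entropy vector $\mathbf{h}\in\Lambda_3$ lying in the relative interior of $\Theta$ (i.e., in $\Theta$ but in no proper face of $\Theta$) such that $\mathbf{h}\notin\Theta^{\mathrm{in}}$.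
   Context: All logarithms are base 2 and entropies are in bits. For a discrete random vector $(X_1,X_2,X_3)$, its entropy vector is $\mathbf{h}=[h_1,h_2,h_3,h_{12},h_{13},h_{23},h_{123}]^\intercal\in\mathbb{R}^7$, where $h_\alpha$ is the Shannon entropy of $(X_i)_{i\in\alpha}$. A discrete random variable $X$ is quasi-uniform if there is a constant $p\in(0,1]$ with $\Pr\{X=x\}\in\{p,0\}$ for all $x$; a random vector $(X_1,X_2,X_3)$ is quasi-uniform if $(X_i)_{i\in\alpha}$ is quasi-uniform for every nonempty $\alpha\subseteq\{1,2,3\}$. A quasi-uniform entropy vector is the entropy vector of a quasi-uniform random vector. $\Theta$ is a face of the polymatroid cone $\Gamma_3$ (the set of $\mathbf{h}$ satisfying the Shannon elemental inequalities). *)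

theory Defs
  imports "HOL-Analysis.Analysis" "HOL-Probability.Probability"
begin

text \<open>A triple of discrete random variables is represented by its joint distribution,
  a pmf on nat x nat x nat (the values of a discrete random variable form a countable
  set, which we code into nat).\<close>

type_synonym triple_dist = "(nat \<times> nat \<times> nat) pmf"

definition entropy_pmf :: "'a pmf \<Rightarrow> real" where
  "entropy_pmf q = infsum (\<lambda>x. - pmf q x * log 2 (pmf q x)) (set_pmf q)"

definition quasi_uniform_pmf :: "'a pmf \<Rightarrow> bool" where
  "quasi_uniform_pmf q \<longleftrightarrow> (\<exists>p. 0 < p \<and> p \<le> 1 \<and> (\<forall>x. pmf q x \<in> {p, 0}))"

definition m1 :: "triple_dist \<Rightarrow> nat pmf" where "m1 P = map_pmf (\<lambda>(a,b,c). a) P"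
definition m2 :: "triple_dist \<Rightarrow> nat pmf" where "m2 P = map_pmf (\<lambda>(a,b,c). b) P"
definition m3 :: "triple_dist \<Rightarrow> nat pmf" where "m3 P = map_pmf (\<lambda>(a,b,c). c) P"
definition m12 :: "triple_dist \<Rightarrow> (nat \<times> nat) pmf" where "m12 P = map_pmf (\<lambda>(a,b,c). (a,b)) P"
definition m13 :: "triple_dist \<Rightarrow> (nat \<times> nat) pmf" where "m13 P = map_pmf (\<lambda>(a,b,c). (a,c)) P"
definition m23 :: "triple_dist \<Rightarrow> (nat \<times> nat) pmf" where "m23 P = map_pmf (\<lambda>(a,b,c). (b,c)) P"

definition entropy_vector :: "triple_dist \<Rightarrow> real^7" where
  "entropy_vector P = vector [entropy_pmf (m1 P), entropy_pmf (m2 P), entropy_pmf (m3 P),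
     entropy_pmf (m12 P), entropy_pmf (m13 P), entropy_pmf (m23 P), entropy_pmf P]"

definition quasi_uniform_triple :: "triple_dist \<Rightarrow> bool" where
  "quasi_uniform_triple P \<longleftrightarrow>
     quasi_uniform_pmf (m1 P) \<and> quasi_uniform_pmf (m2 P) \<and> quasi_uniform_pmf (m3 P) \<and>
     quasi_uniform_pmf (m12 P) \<and> quasi_uniform_pmf (m13 P) \<and> quasi_uniform_pmf (m23 P) \<and>
     quasi_uniform_pmf P"

definition Gamma3_star :: "(real^7) set" where
  "Gamma3_star = {entropy_vector P | P. True}"

definition Lambda3 :: "(real^7) set" where
  "Lambda3 = {entropy_vector P | P. quasi_uniform_triple P}"

definition e1 :: "real^7" where "e1 = vector [1,0,0,1,1,0,1]"
definition e2 :: "real^7" where "e2 = vector [0,1,0,1,0,1,1]"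
definition e3 :: "real^7" where "e3 = vector [0,0,1,0,1,1,1]"
definition e123' :: "real^7" where "e123' = vector [1,1,1,2,2,2,2]"

definition Theta :: "(real^7) set" where
  "Theta = {l1 *\<^sub>R e1 + l2 *\<^sub>R e2 + l3 *\<^sub>R e3 + l4 *\<^sub>R e123' | l1 l2 l3 l4.
              l1 \<ge> 0 \<and> l2 \<ge> 0 \<and> l3 \<ge> 0 \<and> l4 \<ge> 0}"

definition Theta_in :: "(real^7) set" where
  "Theta_in = {l1 *\<^sub>R e1 + l2 *\<^sub>R e2 + l3 *\<^sub>R e3 + log 2 (real m) *\<^sub>R e123' | l1 l2 l3 m.
              l1 \<ge> 0 \<and> l2 \<ge> 0 \<and> l3 \<ge> 0 \<and> m \<ge> 1}"

end

theory Submission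
  imports Defs
begin

lemma entropy_uniform:
  assumes "finite T" "T \<noteq> {}"
  shows "entropy_pmf (pmf_of_set T) = log 2 (card T)"
proof -
  have n: "card T > 0" using assms by (simp add: card_gt_0_iff)
  have "entropy_pmf (pmf_of_set T) = (\<Sum>x\<in>T. - (1 / real (card T)) * log 2 (1 / real (card T)))"
    unfolding entropy_pmf_def using assms by (simp add: infsum_finite)
  also have "\<dots> = log 2 (card T)"
    using n by (simp add: log_divide)
  finally show ?thesis .
qed

lemma qu_uniform:
  assumes "finite T" "T \<noteq> {}"
  shows "quasi_uniform_pmf (pmf_of_set T)"
  unfolding quasi_uniform_pmf_def
proof (intro exI[of _ "1 / real (card T)"] conjI allI)
  have n: "card T > 0" using assms by (simp add: card_gt_0_iff)
  show "0 < 1 / real (card T)" using n by simp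
  show "1 / real (card T) \<le> 1" using n by simp
  fix x show "pmf (pmf_of_set T) x \<in> {1 / real (card T), 0}"
    using assms by (auto simp: indicator_def)
qed

lemma map_uniform:
  assumes "finite S" "S \<noteq> {}" "card S = k * card (f ` S)"
    "\<forall>y\<in>f ` S. card (S \<inter> f -` {y}) = k"
  shows "map_pmf f (pmf_of_set S) = pmf_of_set (f ` S)"
proof (rule pmf_eqI)
  fix y
  have "pmf (map_pmf f (pmf_of_set S)) y = card (S \<inter> f -` {y}) / card S"
    using assms by (simp add: pmf_map measure_pmf_of_set)
  also have "\<dots> = pmf (pmf_of_set (f ` S)) y"
  proof (cases "y \<in> f ` S")
    case True
    have c: "card S > 0" using assms(1,2) by (simp add: card_gt_0_iff)
    then have k: "k > 0" using assms(3) by (cases k) auto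
    have "card (S \<inter> f -` {y}) = k" using True assms(4) by blast
    then show ?thesis using True k assms(1,2,3) by (simp add: indicator_def)
  next
    case False
    then have "S \<inter> f -` {y} = {}" by auto
    then show ?thesis using False assms by (simp add: indicator_def)
  qed
  finally show "pmf (map_pmf f (pmf_of_set S)) y = pmf (pmf_of_set (f ` S)) y" .
qed

definition SS :: "(nat \<times> nat \<times> nat) set" where
 "SS = {(0,0,1), (0,0,2), (0,1,0), (0,1,1), (0,2,0), (0,2,2), (1,0,0), (1,0,1), (1,1,0), (1,1,2), (1,2,1), (1,2,2), (2,0,0), (2,0,2), (2,1,1), (2,1,2), (2,2,0), (2,2,1)}"

lemma SS_card: "card SS = 18" by (simp add: SS_def)


lemma vec_add7: "(vector [a1,a2,a3,a4,a5,a6,a7] :: real^7) + vector [b1,b2,b3,b4,b5,b6,b7] = vector [a1+b1,a2+b2,a3+b3,a4+b4,a5+b5,a6+b6,a7+b7]"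
  unfolding vector_def vec_eq_iff by (simp add: fun_upd_def)

lemma vec_scale7: "c *\<^sub>R (vector [a1,a2,a3,a4,a5,a6,a7] :: real^7) = vector [c*a1,c*a2,c*a3,c*a4,c*a5,c*a6,c*a7]"
  unfolding vector_def vec_eq_iff by (simp add: fun_upd_def)

lemma vec_comp7:
  "(vector [a1,a2,a3,a4,a5,a6,a7] :: real^7) $ 1 = a1"
  "(vector [a1,a2,a3,a4,a5,a6,a7] :: real^7) $ 6 = a6"
  "(vector [a1,a2,a3,a4,a5,a6,a7] :: real^7) $ 7 = a7"
  by (simp_all add: vector_def)

lemma face_lemma:
  fixes g1 g2 g3 g4 :: "'a::real_vector"
  defines "C \<equiv> {l1 *\<^sub>R g1 + l2 *\<^sub>R g2 + l3 *\<^sub>R g3 + l4 *\<^sub>R g4 | l1 l2 l3 l4.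
              l1 \<ge> 0 \<and> l2 \<ge> 0 \<and> l3 \<ge> 0 \<and> l4 \<ge> 0}"
  assumes c: "c > 0" and h: "h = g1 + g2 + g3 + c *\<^sub>R g4"
    and F: "F face_of C" and hF: "h \<in> F"
  shows "F = C"
proof
  show "F \<subseteq> C" using F face_of_imp_subset by blast
  show "C \<subseteq> F"
  proof
    fix y assume "y \<in> C"
    then obtain a1 a2 a3 a4 where y: "y = a1 *\<^sub>R g1 + a2 *\<^sub>R g2 + a3 *\<^sub>R g3 + a4 *\<^sub>R g4"
      and a: "a1 \<ge> 0" "a2 \<ge> 0" "a3 \<ge> 0" "a4 \<ge> 0" unfolding C_def by blast
    show "y \<in> F"
    proof (cases "y = h")
      case True then show ?thesis using hF by simp
    next
      case False
      define d where "d = min 1 c"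
      define t where "t = d / (1 + a1 + a2 + a3 + a4)"
      have d: "d > 0" "d \<le> 1" "d \<le> c" using c by (auto simp: d_def)
      have t: "t > 0" using d a by (simp add: t_def)
      have ta: "t * a1 \<le> d" "t * a2 \<le> d" "t * a3 \<le> d" "t * a4 \<le> d"
        using a d by (auto simp: t_def field_simps)
      define z where "z = (1 + t) *\<^sub>R h - t *\<^sub>R y"
      have zeq: "z = ((1+t) - t*a1) *\<^sub>R g1 + ((1+t) - t*a2) *\<^sub>R g2 + ((1+t) - t*a3) *\<^sub>R g3
                  + ((1+t)*c - t*a4) *\<^sub>R g4"
        unfolding z_def h y by (simp add: algebra_simps)
      have "(1+t)*c - t*a4 \<ge> 0"
      proof -
        have "t*a4 \<le> c" using ta d by linarith
        also have "c \<le> (1+t)*c" using t c by simp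
        finally show ?thesis by simp
      qed
      then have zC: "z \<in> C" unfolding C_def zeq
        using ta d t by (intro CollectI exI[of _ "(1+t) - t*a1"] exI[of _ "(1+t) - t*a2"]
            exI[of _ "(1+t) - t*a3"] exI[of _ "(1+t)*c - t*a4"]) auto
      have yz: "y \<noteq> z"
      proof
        assume "y = z"
        then have "(1 + t) *\<^sub>R y = (1 + t) *\<^sub>R h" unfolding z_def by (simp add: algebra_simps)
        then have "y = h" using t by simp
        then show False using False by simp
      qed
      have "h = (1 - 1/(1+t)) *\<^sub>R y + (1/(1+t)) *\<^sub>R z"
      proof -
        have u1: "1 - 1/(1+t) = t/(1+t)" "(1/(1+t)) * (1+t) = 1" "(1/(1+t)) * t = t/(1+t)"
          using t by (simp_all add: field_simps)
        have "(1/(1+t)) *\<^sub>R z = h - (t/(1+t)) *\<^sub>R y"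
          unfolding z_def using t by (simp add: scaleR_diff_right u1)
        then show ?thesis by (simp add: u1)
      qed
      then have "h \<in> open_segment y z"
        unfolding in_segment using yz t
        by (intro conjI exI[of _ "1/(1+t)"]) (auto simp: field_simps)
      moreover have "y \<in> C" using \<open>y \<in> C\<close> .
      ultimately show "y \<in> F" using face_ofD[OF F _ _ zC hF] by blast
    qed
  qed
qed

abbreviation "PP \<equiv> pmf_of_set SS"

lemma SS_fin: "finite SS" "SS \<noteq> {}" by (simp_all add: SS_def)

lemma map_uniform':
  assumes "finite S" "S \<noteq> {}" "f ` S = T" "card S = k * card T"
    "\<forall>y\<in>T. card (S \<inter> f -` {y}) = k"
  shows "map_pmf f (pmf_of_set S) = pmf_of_set T"
  using map_uniform[of S k f] assms by simp

lemma mm1: "m1 PP = pmf_of_set {0,1,2}"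
  unfolding m1_def by (rule map_uniform'[where k=6]) (auto simp: SS_def)
lemma mm2: "m2 PP = pmf_of_set {0,1,2}"
  unfolding m2_def by (rule map_uniform'[where k=6]) (auto simp: SS_def)
lemma mm3: "m3 PP = pmf_of_set {0,1,2}"
  unfolding m3_def by (rule map_uniform'[where k=6]) (auto simp: SS_def)
lemma mm12: "m12 PP = pmf_of_set {(0,0),(0,1),(0,2),(1,0),(1,1),(1,2),(2,0),(2,1),(2,2)}"
  unfolding m12_def by (rule map_uniform'[where k=2]) (auto simp: SS_def)
lemma mm13: "m13 PP = pmf_of_set {(0,0),(0,1),(0,2),(1,0),(1,1),(1,2),(2,0),(2,1),(2,2)}"
  unfolding m13_def by (rule map_uniform'[where k=2]) (auto simp: SS_def)
lemma mm23: "m23 PP = pmf_of_set {(0,0),(0,1),(0,2),(1,0),(1,1),(1,2),(2,0),(2,1),(2,2)}"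
  unfolding m23_def by (rule map_uniform'[where k=2]) (auto simp: SS_def)

lemma card18: "card SS = 18"
  by (simp add: SS_def)

lemma qu_PP: "quasi_uniform_triple PP"
  unfolding quasi_uniform_triple_def mm1 mm2 mm3 mm12 mm13 mm23
  using SS_fin by (intro conjI qu_uniform) auto

lemma ev_PP: "entropy_vector PP = vector [log 2 3, log 2 3, log 2 3, log 2 9, log 2 9, log 2 9, log 2 18]"
  unfolding entropy_vector_def mm1 mm2 mm3 mm12 mm13 mm23
  using SS_fin by (simp add: entropy_uniform card18)

lemma ev_repr: "entropy_vector PP = e1 + e2 + e3 + (log 2 3 - 1) *\<^sub>R e123'"
proof -
  have 9: "log 2 9 = 2 * log 2 3"
    using log_mult[of 2 3 3] by simp
  have 18: "log 2 18 = 1 + 2 * log 2 3"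
    using log_mult[of 2 2 9] 9 by simp
  show ?thesis unfolding ev_PP e1_def e2_def e3_def e123'_def vec_add7 vec_scale7
    by (simp add: 9 18 algebra_simps)
qed

theorem theorem4:
  shows "\<exists>h \<in> Lambda3. h \<in> Theta \<and> (\<forall>F. F face_of Theta \<and> F \<noteq> Theta \<longrightarrow> h \<notin> F)
            \<and> h \<notin> Theta_in"
proof (intro bexI conjI allI impI)
  define c where "c = log 2 3 - 1"
  have c: "c > 0" unfolding c_def by simp
  let ?h = "entropy_vector PP"
  show "?h \<in> Lambda3" unfolding Lambda3_def using qu_PP by blast
  show "?h \<in> Theta" unfolding Theta_def ev_repr using c c_def
    by (intro CollectI exI[of _ 1] exI[of _ "c"]) auto
  fix F assume "F face_of Theta \<and> F \<noteq> Theta"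
  then show "?h \<notin> F"
    using face_lemma[of c ?h e1 e2 e3 e123' F] c unfolding c_def Theta_def ev_repr by auto
next
  show "entropy_vector PP \<notin> Theta_in"
  proof
    assume "entropy_vector PP \<in> Theta_in"
    then obtain l1 l2 l3 and m :: nat where m: "m \<ge> 1" and
      eq: "entropy_vector PP = l1 *\<^sub>R e1 + l2 *\<^sub>R e2 + l3 *\<^sub>R e3 + log 2 (real m) *\<^sub>R e123'"
      unfolding Theta_in_def by blast
    have "vector [log 2 3, log 2 3, log 2 3, log 2 9, log 2 9, log 2 9, log 2 18] =
      (vector [l1 + log 2 m, l2 + log 2 m, l3 + log 2 m, l1+l2 + 2*log 2 m, l1+l3 + 2*log 2 m,
               l2+l3 + 2*log 2 m, l1+l2+l3 + 2*log 2 m] :: real^7)"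
      using eq unfolding ev_PP e1_def e2_def e3_def e123'_def vec_add7 vec_scale7
      by (simp add: algebra_simps)
    then have "log 2 3 = l1 + log 2 m" "log 2 9 = l2+l3 + 2*log 2 m" "log 2 18 = l1+l2+l3 + 2*log 2 m"
      by (metis vec_comp7)+
    moreover have "log 2 9 = 2 * log 2 3"
      using log_mult[of 2 3 3] by simp
    moreover have "log 2 18 = 1 + 2 * log 2 3"
      using log_mult[of 2 2 9] \<open>log 2 9 = 2 * log 2 3\<close> by simp
    ultimately have "log 2 (real m) + 1 = log 2 3" by linarith
    then have "log 2 (2 * real m) = log 2 3" using m by (simp add: log_mult)
    then have "log 2 (2 * real m) \<le> log 2 3" "log 2 3 \<le> log 2 (2 * real m)" by simp_all
    then have "2 * real m \<le> 3" "3 \<le> 2 * real m" using m by simp_all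
    then have "2 * real m = 3" by linarith
    then have "2 * m = 3" by linarith
    then show False by presburger
  qed
qed

end
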